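(* Let $n,m$ be positive integers, $A\in\mathbb{R}^{n\times n}$, $B\in\mathbb{R}^{m\times n}$, and let $p:\mathbb{R}^n_+\to\mathbb{R}^n_+$, $c:\mathbb{R}^n_+\to\mathbb{R}^n_+$, $r:\mathbb{R}^m_+\to\mathbb{R}^m_+$ be maps. Put $\Omega=\mathbb{R}^n_+\times\mathbb{R}^n_+\times\mathbb{R}^m_+$ and define $g:\Omega\to\mathbb{R}^{2n+m}$ by $$g(x,\lambda,v)=\big((I-A)^T\lambda-p(x)-B^Tv;\ c(\lambda)-(I-A)x;\ Bx-r(v)\big).$$ For $y^*=(x^*,\lambda^*,v^* )\in\Omega$ the following are equivalent: (i) $x^*\in\operatorname{argmin}\{\langle p(x^* ),X\rangle : (I-A)X\ge c(\lambda^* ),\ BX\le r(v^* ),\ X\in\mathbb{R}^n_+\}$ and $(\lambda^*,v^* )\in\operatorname{argmax}\{\langle c(\lambda^* ),\Lambda\rangle-\langle r(v^* ),V\rangle : (I-A)^T\Lambda-B^TV\le p(x^* ),\ \Lambda\in\mathbb{R}^n_+,\ V\in\mathbb{R}^m_+\}$; (ii) $\langle g(y^* ),y-y^*\rangle\le 0$ for all $y\in\Omega$.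
   Context: Standing assumptions of the paper: $A$ (the balance matrix) has no zero rows and columns and is productive, i.e. for every $c\in\mathbb{R}^n_+$ the system $x-Ax=c$ has a solution $x\in\mathbb{R}^n_+$; $B$ (the technological matrix) has no zero row and no zero column. Vector inequalities are componentwise and $\langle\cdot,\cdot\rangle$ is the Euclidean inner product. A triple $y^*$ satisfying (i) is called a nonlinear production–consumption equilibrium (NPCE). *)

theory Defs
  imports "HOL-Analysis.Analysis"
begin

(* vector inequalities on real^'n are componentwise (library instance of ord for vec) *)

definition no_zero_rows :: "real^'n^'m \<Rightarrow> bool" where
  "no_zero_rows M \<longleftrightarrow> (\<forall>i. \<exists>j. M $ i $ j \<noteq> 0)"

definition no_zero_cols :: "real^'n^'m \<Rightarrow> bool" where
  "no_zero_cols M \<longleftrightarrow> (\<forall>j. \<exists>i. M $ i $ j \<noteq> 0)"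

definition productive :: "real^'n^'n \<Rightarrow> bool" where
  "productive A \<longleftrightarrow> (\<forall>c::real^'n. c \<ge> 0 \<longrightarrow> (\<exists>x. x \<ge> 0 \<and> x - A *v x = c))"

definition g_map ::
  "real^'n^'n \<Rightarrow> real^'n^'m \<Rightarrow> (real^'n \<Rightarrow> real^'n) \<Rightarrow> (real^'n \<Rightarrow> real^'n) \<Rightarrow>
   (real^'m \<Rightarrow> real^'m) \<Rightarrow> real^'n \<Rightarrow> real^'n \<Rightarrow> real^'m \<Rightarrow> (real^'n) \<times> (real^'n) \<times> (real^'m)"
  where
  "g_map A B p c r x lam v =
     (transpose (mat 1 - A) *v lam - p x - transpose B *v v,
      c lam - (mat 1 - A) *v x,
      B *v x - r v)"

(* Euclidean inner product on R^n \<times> R^n \<times> R^m = R^(2n+m) *)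
definition inner3 :: "(real^'n) \<times> (real^'n) \<times> (real^'m) \<Rightarrow> (real^'n) \<times> (real^'n) \<times> (real^'m) \<Rightarrow> real" where
  "inner3 a b = (fst a \<bullet> fst b) + (fst (snd a) \<bullet> fst (snd b)) + (snd (snd a) \<bullet> snd (snd b))"

end

theory Submission imports Defs begin

lemma tr_inner: "(y::real^'b) \<bullet> (transpose (M::real^'b^'a) *v x) = (M *v y) \<bullet> x"
  by (metis dot_lmul_matrix inner_commute transpose_matrix_vector)

lemma inner_nonneg_vec: "0 \<le> (a::real^'n) \<Longrightarrow> 0 \<le> b \<Longrightarrow> 0 \<le> a \<bullet> b"
  by (auto simp: inner_vec_def less_eq_vec_def intro!: sum_nonneg)

lemma cone_iff:
  fixes d xs :: "real^'n"
  assumes "xs \<ge> 0"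
  shows "(\<forall>x. x \<ge> 0 \<longrightarrow> d \<bullet> (x - xs) \<le> 0) \<longleftrightarrow> d \<le> 0 \<and> d \<bullet> xs = 0"
proof
  assume H: "\<forall>x. x \<ge> 0 \<longrightarrow> d \<bullet> (x - xs) \<le> 0"
  have "d $ i \<le> 0" for i
  proof -
    have "xs + axis i 1 \<ge> 0" using assms by (auto simp: less_eq_vec_def axis_def)
    then have "d \<bullet> (xs + axis i 1 - xs) \<le> 0" using H by blast
    then show ?thesis by (simp add: inner_axis)
  qed
  moreover have "d \<bullet> (0 - xs) \<le> 0" using H by (meson order_refl)
  moreover have "d \<bullet> (2 *\<^sub>R xs - xs) \<le> 0" using H assms
    by (auto simp: less_eq_vec_def)
  ultimately show "d \<le> 0 \<and> d \<bullet> xs = 0"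
    by (auto simp: less_eq_vec_def inner_diff_right algebra_simps)
next
  assume "d \<le> 0 \<and> d \<bullet> xs = 0"
  then show "\<forall>x. x \<ge> 0 \<longrightarrow> d \<bullet> (x - xs) \<le> 0"
    using inner_nonneg_vec[of "-d"] by (auto simp: inner_diff_right less_eq_vec_def)
qed

lemma strong_dual:
  fixes M :: "real^'n^'n" and B :: "real^'n^'m" and P C xs :: "real^'n" and R :: "real^'m"
  assumes opt: "is_arg_min (\<lambda>X. P \<bullet> X) (\<lambda>X. M *v X \<ge> C \<and> B *v X \<le> R \<and> X \<ge> 0) xs"
  shows "\<exists>L V. L \<ge> 0 \<and> V \<ge> 0 \<and> transpose M *v L - transpose B *v V \<le> P \<and> C \<bullet> L - R \<bullet> V \<ge> P \<bullet> xs"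
proof -
  define z where "z = P \<bullet> xs"
  have feas: "M *v xs \<ge> C" "B *v xs \<le> R" "xs \<ge> 0" using opt by (auto simp: is_arg_min_def)
  have minim: "\<not> (M *v X \<ge> C \<and> B *v X \<le> R \<and> X \<ge> 0 \<and> P \<bullet> X < z)" for X
    using opt by (auto simp: is_arg_min_def z_def)
  define S :: "((real^'n) \<times> real) set" where
    "S = range (\<lambda>i. (transpose M *v axis i 1, C $ i)) \<union> range (\<lambda>j. (- (transpose B *v axis j 1), - (R $ j)))
       \<union> range (\<lambda>k. (axis k 1, 0)) \<union> {(0, -1)}"
  define K :: "((real^'n) \<times> real) set" where
    "K = {(transpose M *v L - transpose B *v V + s, C \<bullet> L - R \<bullet> V - t) | L V s t. L \<ge> 0 \<and> V \<ge> 0 \<and> s \<ge> 0 \<and> t \<ge> 0}"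
  have finS: "finite S" unfolding S_def by simp
  have coneK: "convex_cone K"
    unfolding convex_cone_iff
  proof (intro conjI ballI allI impI)
    show "0 \<in> K" unfolding K_def
      by (rule CollectI, rule exI[of _ 0], rule exI[of _ 0], rule exI[of _ 0], rule exI[of _ 0]) (simp add: zero_prod_def)
  next
    fix x y assume "x \<in> K" "y \<in> K"
    then obtain L V s t L' V' s' t' where
      x: "x = (transpose M *v L - transpose B *v V + s, C \<bullet> L - R \<bullet> V - t)" "L \<ge> 0" "V \<ge> 0" "s \<ge> 0" "t \<ge> 0" and
      y: "y = (transpose M *v L' - transpose B *v V' + s', C \<bullet> L' - R \<bullet> V' - t')" "L' \<ge> 0" "V' \<ge> 0" "s' \<ge> 0" "t' \<ge> 0"
      unfolding K_def by blast
    show "x + y \<in> K" unfolding K_def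
      apply (rule CollectI, rule exI[of _ "L + L'"], rule exI[of _ "V + V'"], rule exI[of _ "s + s'"], rule exI[of _ "t + t'"])
      using x y by (simp add: algebra_simps inner_add_right)
  next
    fix x and a :: real assume "x \<in> K" "0 \<le> a"
    then obtain L V s t where
      x: "x = (transpose M *v L - transpose B *v V + s, C \<bullet> L - R \<bullet> V - t)" "L \<ge> 0" "V \<ge> 0" "s \<ge> 0" "t \<ge> 0"
      unfolding K_def by blast
    show "a *\<^sub>R x \<in> K" unfolding K_def
      apply (rule CollectI, rule exI[of _ "a *\<^sub>R L"], rule exI[of _ "a *\<^sub>R V"], rule exI[of _ "a *\<^sub>R s"], rule exI[of _ "a * t"])
      using x \<open>0 \<le> a\<close> by (simp add: algebra_simps scaleR_nonneg_nonneg)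
  qed
  have SK: "S \<subseteq> K"
  proof -
    have ax: "axis i (1::real) \<ge> 0" for i :: 'n by (auto simp: less_eq_vec_def axis_def)
    have ax2: "axis i (1::real) \<ge> 0" for i :: 'm by (auto simp: less_eq_vec_def axis_def)
    have 1: "(transpose M *v axis i 1, C $ i) \<in> K" for i unfolding K_def
      apply (rule CollectI, rule exI[of _ "axis i 1"], rule exI[of _ 0], rule exI[of _ 0], rule exI[of _ 0])
      using ax by (simp add: inner_axis)
    have 2: "(- (transpose B *v axis j 1), - (R $ j)) \<in> K" for j unfolding K_def
      apply (rule CollectI, rule exI[of _ 0], rule exI[of _ "axis j 1"], rule exI[of _ 0], rule exI[of _ 0])
      using ax2 by (simp add: inner_axis)
    have 3: "(axis k 1, 0) \<in> K" for k unfolding K_def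
      apply (rule CollectI, rule exI[of _ 0], rule exI[of _ 0], rule exI[of _ "axis k 1"], rule exI[of _ 0])
      using ax by simp
    have 4: "(0, -1) \<in> K" unfolding K_def
      apply (rule CollectI, rule exI[of _ 0], rule exI[of _ 0], rule exI[of _ 0], rule exI[of _ 1])
      by simp
    show ?thesis unfolding S_def using 1 2 3 4 by blast
  qed
  have hullK: "convex_cone hull S \<subseteq> K"
    using hull_minimal[of S K convex_cone] SK coneK by blast
  show ?thesis
  proof (cases "(P, z) \<in> convex_cone hull S")
    case True
    then have "(P, z) \<in> K" using hullK by blast
    then obtain L V s t where
      x: "P = transpose M *v L - transpose B *v V + s" "z = C \<bullet> L - R \<bullet> V - t" "L \<ge> 0" "V \<ge> 0" "s \<ge> 0" "t \<ge> 0"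
      unfolding K_def by blast
    show ?thesis
      apply (rule exI[of _ L], rule exI[of _ V])
      using x by (auto simp: z_def less_eq_vec_def)
  next
    case False
    obtain a b where ab: "inner a (P, z) < b" "\<forall>x\<in>convex_cone hull S. inner a x > b"
      using separating_hyperplane_closed_point[OF convex_convex_cone_hull closed_convex_cone_hull[OF finS] False]
      by blast
    obtain y \<tau> where a: "a = (y, \<tau>)" by (cases a)
    have b0: "b < 0" using ab(2) convex_cone_hull_contains_0[of S] by fastforce
    have nn: "inner a k \<ge> 0" if "k \<in> S" for k
    proof (rule ccontr)
      assume "\<not> inner a k \<ge> 0"
      then have neg: "inner a k < 0" by simp
      have "k \<in> convex_cone hull S" using that by (simp add: hull_inc)
      then have "(b / inner a k) *\<^sub>R k \<in> convex_cone hull S"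
        using neg b0 by (intro convex_cone_hull_mul) (auto simp: divide_nonpos_neg)
      then have "inner a ((b / inner a k) *\<^sub>R k) > b" using ab(2) by blast
      then show False using neg by simp
    qed
    have g1: "(M *v y) $ i + \<tau> * C $ i \<ge> 0" for i
      using nn[of "(transpose M *v axis i 1, C $ i)"] unfolding a S_def by (simp add: tr_inner inner_axis del: transpose_matrix_vector)
    have g2: "- (B *v y) $ j - \<tau> * R $ j \<ge> 0" for j
      using nn[of "(- (transpose B *v axis j 1), - (R $ j))"] unfolding a S_def by (simp add: tr_inner inner_axis del: transpose_matrix_vector)
    have g3: "y $ k \<ge> 0" for k
      using nn[of "(axis k 1, 0)"] unfolding a S_def by (simp add: inner_axis)
    have g4: "\<tau> \<le> 0"
      using nn[of "(0, -1)"] unfolding a S_def by simp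
    have obj: "y \<bullet> P + \<tau> * z < 0" using ab(1) b0 unfolding a by simp
    show ?thesis
    proof (cases "\<tau> = 0")
      case True
      define X where "X = xs + y"
      have "M *v X \<ge> C" using feas(1) g1 True by (auto simp: X_def less_eq_vec_def algebra_simps add_increasing2)
      moreover have "B *v X \<le> R" proof -
        have "(B *v X) $ i \<le> R $ i" for i
          using feas(2) g2[of i] True by (simp add: X_def less_eq_vec_def algebra_simps) (smt (verit))
        then show ?thesis by (simp add: less_eq_vec_def)
      qed
      moreover have "X \<ge> 0" using feas(3) g3 by (auto simp: X_def less_eq_vec_def)
      moreover have "P \<bullet> X < z" using obj True by (simp add: X_def z_def inner_add_right inner_commute)
      ultimately show ?thesis using minim by blast
    next
      case False
      then have tneg: "\<tau> < 0" using g4 by simp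
      define X where "X = (1 / (- \<tau>)) *\<^sub>R y"
      have MX: "M *v X = (1 / (- \<tau>)) *\<^sub>R (M *v y)" by (simp only: X_def matrix_vector_mult_scaleR)
      have BX: "B *v X = (1 / (- \<tau>)) *\<^sub>R (B *v y)" by (simp only: X_def matrix_vector_mult_scaleR)
      have "M *v X \<ge> C"
      proof -
        have "C $ i \<le> (M *v X) $ i" for i
          using g1[of i] tneg by (simp add: MX field_simps)
        then show ?thesis by (simp add: less_eq_vec_def)
      qed
      moreover have "B *v X \<le> R"
      proof -
        have "(B *v X) $ i \<le> R $ i" for i
          using g2[of i] tneg by (simp add: BX field_simps)
        then show ?thesis by (simp add: less_eq_vec_def)
      qed
      moreover have "X \<ge> 0" using g3 tneg by (auto simp: X_def less_eq_vec_def divide_nonneg_neg)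
      moreover have "P \<bullet> X < z"
        using obj tneg by (simp add: X_def inner_commute field_simps)
      ultimately show ?thesis using minim by blast
    qed
  qed
qed

theorem theorem1:
  fixes A :: "real^'n^'n" and B :: "real^'n^'m"
    and p c :: "real^'n \<Rightarrow> real^'n" and r :: "real^'m \<Rightarrow> real^'m"
    and xs lams :: "real^'n" and vs :: "real^'m"
  assumes A_rows: "no_zero_rows A" and A_cols: "no_zero_cols A"
    and A_prod: "productive A"
    and B_rows: "no_zero_rows B" and B_cols: "no_zero_cols B"
    and p_nonneg: "\<And>x. x \<ge> 0 \<Longrightarrow> p x \<ge> 0"
    and c_nonneg: "\<And>x. x \<ge> 0 \<Longrightarrow> c x \<ge> 0"
    and r_nonneg: "\<And>v. v \<ge> 0 \<Longrightarrow> r v \<ge> 0"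
    and ys_in: "xs \<ge> 0" "lams \<ge> 0" "vs \<ge> 0"
  shows "(is_arg_min (\<lambda>X. p xs \<bullet> X)
            (\<lambda>X. (mat 1 - A) *v X \<ge> c lams \<and> B *v X \<le> r vs \<and> X \<ge> 0) xs
          \<and> is_arg_max (\<lambda>(L, V). c lams \<bullet> L - r vs \<bullet> V)
            (\<lambda>(L, V). transpose (mat 1 - A) *v L - transpose B *v V \<le> p xs \<and> L \<ge> 0 \<and> V \<ge> 0)
            (lams, vs))
     \<longleftrightarrow>
         (\<forall>x lam v. x \<ge> 0 \<and> lam \<ge> 0 \<and> v \<ge> 0 \<longrightarrow>
            inner3 (g_map A B p c r xs lams vs) (x - xs, lam - lams, v - vs) \<le> 0)"
proof -
  define M where "M = mat 1 - A"
  define P where "P = p xs"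
  define C where "C = c lams"
  define R where "R = r vs"
  define d where "d = transpose M *v lams - P - transpose B *v vs"
  define e where "e = C - M *v xs"
  define f where "f = B *v xs - R"
  have inner3_eq: "inner3 (g_map A B p c r xs lams vs) (x - xs, lam - lams, v - vs)
      = d \<bullet> (x - xs) + e \<bullet> (lam - lams) + f \<bullet> (v - vs)" for x lam v
    by (simp add: inner3_def g_map_def d_def e_def f_def M_def P_def C_def R_def)
  have ii_iff: "(\<forall>x lam v. x \<ge> 0 \<and> lam \<ge> 0 \<and> v \<ge> 0 \<longrightarrow>
            inner3 (g_map A B p c r xs lams vs) (x - xs, lam - lams, v - vs) \<le> 0)
      \<longleftrightarrow> (d \<le> 0 \<and> d \<bullet> xs = 0) \<and> (e \<le> 0 \<and> e \<bullet> lams = 0) \<and> (f \<le> 0 \<and> f \<bullet> vs = 0)"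
  proof
    assume H: "\<forall>x lam v. x \<ge> 0 \<and> lam \<ge> 0 \<and> v \<ge> 0 \<longrightarrow>
            inner3 (g_map A B p c r xs lams vs) (x - xs, lam - lams, v - vs) \<le> 0"
    have H': "d \<bullet> (x - xs) + e \<bullet> (lam - lams) + f \<bullet> (v - vs) \<le> 0" if "x \<ge> 0" "lam \<ge> 0" "v \<ge> 0" for x lam v
      using H that unfolding inner3_eq by blast
    have "\<forall>x. x \<ge> 0 \<longrightarrow> d \<bullet> (x - xs) \<le> 0" using ys_in H'[of _ lams vs] by auto
    moreover have "\<forall>x. x \<ge> 0 \<longrightarrow> e \<bullet> (x - lams) \<le> 0"
      using ys_in H'[of xs _ vs] by auto
    moreover have "\<forall>x. x \<ge> 0 \<longrightarrow> f \<bullet> (x - vs) \<le> 0"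
      using ys_in H'[of xs lams] by auto
    ultimately show "(d \<le> 0 \<and> d \<bullet> xs = 0) \<and> (e \<le> 0 \<and> e \<bullet> lams = 0) \<and> (f \<le> 0 \<and> f \<bullet> vs = 0)"
      using cone_iff ys_in by metis
  next
    assume H: "(d \<le> 0 \<and> d \<bullet> xs = 0) \<and> (e \<le> 0 \<and> e \<bullet> lams = 0) \<and> (f \<le> 0 \<and> f \<bullet> vs = 0)"
    then have "\<forall>x. x \<ge> 0 \<longrightarrow> d \<bullet> (x - xs) \<le> 0" "\<forall>x. x \<ge> 0 \<longrightarrow> e \<bullet> (x - lams) \<le> 0"
      "\<forall>x. x \<ge> 0 \<longrightarrow> f \<bullet> (x - vs) \<le> 0"
      using cone_iff ys_in by metis+
    then show "\<forall>x lam v. x \<ge> 0 \<and> lam \<ge> 0 \<and> v \<ge> 0 \<longrightarrow>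
            inner3 (g_map A B p c r xs lams vs) (x - xs, lam - lams, v - vs) \<le> 0"
      by (auto simp: inner3_eq intro: add_nonpos_nonpos)
  qed
  have le_iff: "(u::real^'k) \<le> w \<longleftrightarrow> 0 \<le> w - u" for u w by (simp add: less_eq_vec_def)
  have i_iff: "(is_arg_min (\<lambda>X. P \<bullet> X) (\<lambda>X. M *v X \<ge> C \<and> B *v X \<le> R \<and> X \<ge> 0) xs
          \<and> is_arg_max (\<lambda>(L, V). C \<bullet> L - R \<bullet> V)
            (\<lambda>(L, V). transpose M *v L - transpose B *v V \<le> P \<and> L \<ge> 0 \<and> V \<ge> 0) (lams, vs))
      \<longleftrightarrow> (d \<le> 0 \<and> d \<bullet> xs = 0) \<and> (e \<le> 0 \<and> e \<bullet> lams = 0) \<and> (f \<le> 0 \<and> f \<bullet> vs = 0)"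
  proof
    assume H: "is_arg_min (\<lambda>X. P \<bullet> X) (\<lambda>X. M *v X \<ge> C \<and> B *v X \<le> R \<and> X \<ge> 0) xs
          \<and> is_arg_max (\<lambda>(L, V). C \<bullet> L - R \<bullet> V)
            (\<lambda>(L, V). transpose M *v L - transpose B *v V \<le> P \<and> L \<ge> 0 \<and> V \<ge> 0) (lams, vs)"
    have f1: "M *v xs \<ge> C" "B *v xs \<le> R" using H by (auto simp: is_arg_min_def)
    have f2: "transpose M *v lams - transpose B *v vs \<le> P" using H by (auto simp: is_arg_max_def)
    have mx: "\<And>L V. L \<ge> 0 \<Longrightarrow> V \<ge> 0 \<Longrightarrow> transpose M *v L - transpose B *v V \<le> P \<Longrightarrow> C \<bullet> L - R \<bullet> V \<le> C \<bullet> lams - R \<bullet> vs"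
      using H unfolding is_arg_max_def by (auto simp: not_less)
    obtain L V where LV: "L \<ge> 0" "V \<ge> 0" "transpose M *v L - transpose B *v V \<le> P" "C \<bullet> L - R \<bullet> V \<ge> P \<bullet> xs"
      using strong_dual[where M=M and B=B and P=P and C=C and xs=xs and R=R] H by blast
    have sd: "C \<bullet> lams - R \<bullet> vs \<ge> P \<bullet> xs" using mx[OF LV(1-3)] LV(4) by linarith
    have dle: "d \<le> 0" using f2 by (simp add: d_def less_eq_vec_def) (smt (verit))
    have ele: "e \<le> 0" using f1 by (simp add: e_def less_eq_vec_def)
    have fle: "f \<le> 0" using f1 by (simp add: f_def less_eq_vec_def)
    have a1: "0 \<le> (-d) \<bullet> xs" using dle ys_in by (intro inner_nonneg_vec) (auto simp: less_eq_vec_def)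
    have a2: "0 \<le> (-e) \<bullet> lams" using ele ys_in by (intro inner_nonneg_vec) (auto simp: less_eq_vec_def)
    have a3: "0 \<le> (-f) \<bullet> vs" using fle ys_in by (intro inner_nonneg_vec) (auto simp: less_eq_vec_def)
    have ident: "(-d) \<bullet> xs + (-e) \<bullet> lams + (-f) \<bullet> vs = P \<bullet> xs - (C \<bullet> lams - R \<bullet> vs)"
      unfolding d_def e_def f_def
      by (simp add: inner_diff_left inner_diff_right tr_inner inner_commute del: transpose_matrix_vector)
    have "(-d) \<bullet> xs = 0" "(-e) \<bullet> lams = 0" "(-f) \<bullet> vs = 0" using a1 a2 a3 ident sd by linarith+
    then show "(d \<le> 0 \<and> d \<bullet> xs = 0) \<and> (e \<le> 0 \<and> e \<bullet> lams = 0) \<and> (f \<le> 0 \<and> f \<bullet> vs = 0)"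
      using dle ele fle by simp
  next
    assume H: "(d \<le> 0 \<and> d \<bullet> xs = 0) \<and> (e \<le> 0 \<and> e \<bullet> lams = 0) \<and> (f \<le> 0 \<and> f \<bullet> vs = 0)"
    have f1: "M *v xs \<ge> C" "B *v xs \<le> R" using H by (auto simp: e_def f_def less_eq_vec_def)
    have f2: "transpose M *v lams - transpose B *v vs \<le> P" using H by (auto simp: d_def less_eq_vec_def) (smt (verit))
    have val: "P \<bullet> xs = C \<bullet> lams - R \<bullet> vs"
    proof -
      have "d \<bullet> xs + e \<bullet> lams + f \<bullet> vs = 0" using H by simp
      moreover have "d \<bullet> xs + e \<bullet> lams + f \<bullet> vs = C \<bullet> lams - R \<bullet> vs - P \<bullet> xs"
        unfolding d_def e_def f_def
        by (simp add: inner_diff_left inner_diff_right tr_inner inner_commute del: transpose_matrix_vector)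
      ultimately show ?thesis by linarith
    qed
    have minX: "P \<bullet> xs \<le> P \<bullet> X" if X: "M *v X \<ge> C" "B *v X \<le> R" "X \<ge> 0" for X
    proof -
      have "0 \<le> (P - (transpose M *v lams - transpose B *v vs)) \<bullet> X"
        using f2 X(3) by (intro inner_nonneg_vec) (auto simp: less_eq_vec_def)
      moreover have "0 \<le> (M *v X - C) \<bullet> lams"
        using X(1) ys_in by (intro inner_nonneg_vec) (auto simp: less_eq_vec_def)
      moreover have "0 \<le> (R - B *v X) \<bullet> vs"
        using X(2) ys_in by (intro inner_nonneg_vec) (auto simp: less_eq_vec_def)
      ultimately show ?thesis using val
        by (simp add: inner_diff_left inner_diff_right tr_inner inner_commute del: transpose_matrix_vector)
    qed
    have maxLV: "C \<bullet> L - R \<bullet> V \<le> C \<bullet> lams - R \<bullet> vs"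
      if LV: "transpose M *v L - transpose B *v V \<le> P" "L \<ge> 0" "V \<ge> 0" for L V
    proof -
      have "0 \<le> (P - (transpose M *v L - transpose B *v V)) \<bullet> xs"
        using LV(1) ys_in by (intro inner_nonneg_vec) (auto simp: less_eq_vec_def)
      moreover have "0 \<le> (M *v xs - C) \<bullet> L"
        using f1(1) LV(2) by (intro inner_nonneg_vec) (auto simp: less_eq_vec_def)
      moreover have "0 \<le> (R - B *v xs) \<bullet> V"
        using f1(2) LV(3) by (intro inner_nonneg_vec) (auto simp: less_eq_vec_def)
      ultimately show ?thesis using val
        by (simp add: inner_diff_left inner_diff_right tr_inner inner_commute del: transpose_matrix_vector)
    qed
    show "is_arg_min (\<lambda>X. P \<bullet> X) (\<lambda>X. M *v X \<ge> C \<and> B *v X \<le> R \<and> X \<ge> 0) xs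
          \<and> is_arg_max (\<lambda>(L, V). C \<bullet> L - R \<bullet> V)
            (\<lambda>(L, V). transpose M *v L - transpose B *v V \<le> P \<and> L \<ge> 0 \<and> V \<ge> 0) (lams, vs)"
      unfolding is_arg_min_def is_arg_max_def
      using f1 f2 ys_in minX maxLV by (auto simp: not_less)
  qed
  show ?thesis
    using i_iff ii_iff by (simp add: M_def P_def C_def R_def)
qed

end
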